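(* Let $\Sigma$ be a finite alphabet and let $C \subseteq \Sigma^n$ be a code with $|C|\ge 2$ and minimum Levenshtein distance $d$. Let $t<n$ be a non-negative integer, let $N$ be an integer with $n-t\le N\le n+t$, let $v\in\Sigma^N$, and let $\ell = |B_\mathsf{L}(v,t,t)\cap C|$. If $$t < n - \sqrt{n(n-d/2)},$$ then $$\ell \leq \frac{(d/2)(n+t)}{(d/2-2t)n+t^2} \leq nd.$$
   Context: For words $x,y$ over $\Sigma$ (possibly of different lengths), the Levenshtein distance $d_\mathsf{L}(x,y)$ is the minimum number of single-symbol insertions and deletions needed to transform $x$ into $y$. The minimum Levenshtein distance of a code $C$ is $\min\{d_\mathsf{L}(c_1,c_2): c_1\neq c_2 \in C\}$. For a word $v$ and non-negative integers $a,b$, $B_\mathsf{L}(v,a,b)$ denotes the set of all words obtainable from $v$ by at most $a$ insertions and at most $b$ deletions. *)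

theory Defs
  imports Complex_Main
begin

definition ins1 :: "'a list \<Rightarrow> 'a list \<Rightarrow> bool" where
  "ins1 x y \<longleftrightarrow> (\<exists>u w a. x = u @ w \<and> y = u @ [a] @ w)"

definition indel1 :: "'a list \<Rightarrow> 'a list \<Rightarrow> bool" where
  "indel1 x y \<longleftrightarrow> ins1 x y \<or> ins1 y x"

definition lev_dist :: "'a list \<Rightarrow> 'a list \<Rightarrow> nat" where
  "lev_dist x y = (LEAST k. (indel1 ^^ k) x y)"

definition min_lev_dist :: "'a list set \<Rightarrow> nat" where
  "min_lev_dist C = Min {lev_dist c1 c2 | c1 c2. c1 \<in> C \<and> c2 \<in> C \<and> c1 \<noteq> c2}"

inductive obt :: "'a list \<Rightarrow> nat \<Rightarrow> nat \<Rightarrow> 'a list \<Rightarrow> bool" where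
  refl: "obt x 0 0 x"
| ins: "obt x i j y \<Longrightarrow> ins1 y z \<Longrightarrow> obt x (Suc i) j z"
| del: "obt x i j y \<Longrightarrow> ins1 z y \<Longrightarrow> obt x i (Suc j) z"

definition lev_ball :: "'a list \<Rightarrow> nat \<Rightarrow> nat \<Rightarrow> 'a list set" where
  "lev_ball v a b = {y. \<exists>i j. i \<le> a \<and> j \<le> b \<and> obt v i j y}"

end

theory Submission
  imports Defs "HOL-Library.Sublist"
begin


lemma ins1_len: "ins1 x y \<Longrightarrow> length y = Suc (length x)"
  unfolding ins1_def by auto

lemma ins1_subseq: "ins1 x y \<Longrightarrow> subseq x y"
  unfolding ins1_def by (auto intro: list_emb_append_mono)

lemma indel1_sym: "indel1 x y \<Longrightarrow> indel1 y x"
  unfolding indel1_def by auto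

lemma relpow_indel_sym: "(indel1 ^^ k) x y \<Longrightarrow> (indel1 ^^ k) y x"
proof (induction k arbitrary: x)
  case 0 then show ?case by simp
next
  case (Suc k)
  from Suc.prems obtain z where "indel1 x z" "(indel1 ^^ k) z y" by (rule relpowp_Suc_E2)
  then show ?case using Suc.IH relpowp_Suc_I indel1_sym by metis
qed

lemma relpow_indel_parity: "(indel1 ^^ k) x y \<Longrightarrow> even (length x + length y + k)"
proof (induction k arbitrary: x)
  case 0 then show ?case by simp
next
  case (Suc k)
  from Suc.prems obtain z where "indel1 x z" "(indel1 ^^ k) z y" by (rule relpowp_Suc_E2)
  moreover have "length z = Suc (length x) \<or> length x = Suc (length z)"
    using \<open>indel1 x z\<close> unfolding indel1_def using ins1_len by blast
  ultimately show ?case using Suc.IH by fastforce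
qed

lemma relpow_indel_add: "(indel1 ^^ a) x y \<Longrightarrow> (indel1 ^^ b) y z \<Longrightarrow> (indel1 ^^ (a+b)) x z"
  by (auto simp: relpowp_add)

lemma indel1_Cons: "indel1 a b \<Longrightarrow> indel1 (x#a) (x#b)"
  unfolding indel1_def ins1_def by (metis append_Cons)

lemma relpow_indel_Cons: "(indel1 ^^ k) a b \<Longrightarrow> (indel1 ^^ k) (x#a) (x#b)"
proof (induction k arbitrary: a)
  case 0 then show ?case by simp
next
  case (Suc k)
  from Suc.prems obtain z where "indel1 a z" "(indel1 ^^ k) z b" by (rule relpowp_Suc_E2)
  then show ?case using Suc.IH relpowp_Suc_I2 indel1_Cons by metis
qed

lemma indel1_drop: "indel1 (a#r) r"
  unfolding indel1_def ins1_def by (metis append.left_neutral append_Cons)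

lemma relpow_del_all: "(indel1 ^^ length ys) ys []"
proof (induction ys)
  case Nil then show ?case by simp
next
  case (Cons a r) then show ?case using indel1_drop relpowp_Suc_I2 by fastforce
qed

lemma subseq_path: "subseq z x \<Longrightarrow> (indel1 ^^ (length x - length z)) x z"
proof (induction rule: list_emb.induct)
  case (list_emb_Nil ys) then show ?case using relpow_del_all by simp
next
  case (list_emb_Cons xs ys y)
  have "length xs \<le> length ys" using list_emb_Cons.hyps list_emb_length by blast
  then have "length (y#ys) - length xs = Suc (length ys - length xs)" by simp
  then show ?case using list_emb_Cons.IH indel1_drop relpowp_Suc_I2 by metis
next
  case (list_emb_Cons2 x y xs ys)
  then show ?case using relpow_indel_Cons by fastforce
qed

lemma lev_dist_le: "(indel1 ^^ k) x y \<Longrightarrow> lev_dist x y \<le> k"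
  unfolding lev_dist_def by (rule Least_le)

lemma path_common: "subseq z x \<Longrightarrow> subseq z y \<Longrightarrow>
   (indel1 ^^ ((length x - length z) + (length y - length z))) x y"
  using subseq_path relpow_indel_sym relpow_indel_add by metis

lemma lev_dist_common: "subseq z x \<Longrightarrow> subseq z y \<Longrightarrow>
   lev_dist x y \<le> (length x - length z) + (length y - length z)"
  using path_common lev_dist_le by blast

lemma lev_dist_path: "(indel1 ^^ lev_dist x y) x y"
  unfolding lev_dist_def
  by (rule LeastI[of _ "(length x - length []) + (length y - length [])"])
     (rule path_common; simp)

lemma del_step: "subseq x (u @ [a] @ w) \<Longrightarrow> \<exists>x'. subseq x' x \<and> subseq x' (u @ w) \<and> length x \<le> Suc (length x')"
proof -
  assume "subseq x (u @ [a] @ w)"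
  then obtain x1 x2 where x: "x = x1 @ x2" "subseq x1 u" "subseq x2 ([a] @ w)"
    by (rule subseq_appendE)
  have "subseq (drop 1 x2) w"
    using x(3) by (cases x2) (auto split: if_splits intro: subseq_Cons')
  moreover have "subseq (drop 1 x2) x2" by (cases x2) auto
  ultimately show ?thesis using x
    by (intro exI[of _ "x1 @ drop 1 x2"]) (auto intro: list_emb_append_mono)
qed

lemma obt_common: "obt v i j y \<Longrightarrow> \<exists>x. subseq x v \<and> subseq x y \<and> length v \<le> length x + j \<and> length y + j = length v + i"
proof (induction rule: obt.induct)
  case (refl x) then show ?case by auto
next
  case (ins x i j y z)
  then show ?case using ins1_subseq ins1_len subseq_order.trans by fastforce
next
  case (del x i j y z)
  then obtain p where p: "subseq p x" "subseq p y" "length x \<le> length p + j" "length y + j = length x + i" by blast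
  from del.hyps(2) obtain u w a where uw: "z = u @ w" "y = u @ [a] @ w" unfolding ins1_def by blast
  obtain p' where "subseq p' p" "subseq p' z" "length p \<le> Suc (length p')"
    using del_step p(2) uw by metis
  then show ?case using p uw subseq_order.trans by (intro exI[of _ p']) auto
qed



lemma count_bound:
  fixes L :: "'b set" and S :: "'b \<Rightarrow> nat set" and N :: nat and m lam :: real
  assumes fin: "finite L" and ne: "L \<noteq> {}" and sub: "\<forall>c\<in>L. S c \<subseteq> {..<N}"
    and mle: "\<forall>c\<in>L. m \<le> real (card (S c))"
    and inter: "\<forall>a\<in>L. \<forall>b\<in>L. a \<noteq> b \<longrightarrow> real (card (S a \<inter> S b)) \<le> lam"
    and Npos: "N > 0" and big: "real N \<le> 2 * real (card L) * m"
  shows "real (card L) * (m^2 - real N * lam) \<le> real N * (m - lam)"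
proof -
  define l where "l = real (card L)"
  define deg where "deg x = (\<Sum>c\<in>L. (of_bool (x \<in> S c) :: real))" for x
  define s where "s = (\<Sum>c\<in>L. real (card (S c)))"
  define Q where "Q = (\<Sum>x<N. (deg x)^2)"
  define \<alpha> where "\<alpha> = l * m / real N"
  have card_int: "(\<Sum>x<N. (of_bool (x \<in> A) :: real)) = real (card A)" if "A \<subseteq> {..<N}" for A
  proof -
    have "{..<N} \<inter> {x. x \<in> A} = A" using that by auto
    then show ?thesis by simp
  qed
  have s_eq: "(\<Sum>x<N. deg x) = s"
    unfolding deg_def s_def
    by (subst sum.swap) (intro sum.cong HOL.refl card_int, use sub in auto)
  have Q_eq: "Q = (\<Sum>a\<in>L. \<Sum>b\<in>L. real (card (S a \<inter> S b)))"
  proof -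
    have "Q = (\<Sum>x<N. \<Sum>a\<in>L. \<Sum>b\<in>L. (of_bool (x \<in> S a \<inter> S b) :: real))"
      unfolding Q_def deg_def power2_eq_square sum_product
      by (intro sum.cong HOL.refl) auto
    also have "\<dots> = (\<Sum>a\<in>L. \<Sum>x<N. \<Sum>b\<in>L. (of_bool (x \<in> S a \<inter> S b) :: real))"
      by (rule sum.swap)
    also have "\<dots> = (\<Sum>a\<in>L. \<Sum>b\<in>L. \<Sum>x<N. (of_bool (x \<in> S a \<inter> S b) :: real))"
      by (intro sum.cong HOL.refl sum.swap)
    also have "\<dots> = (\<Sum>a\<in>L. \<Sum>b\<in>L. real (card (S a \<inter> S b)))"
      by (intro sum.cong HOL.refl card_int) (use sub in auto)
    finally show ?thesis .
  qed
  have row: "(\<Sum>b\<in>L. real (card (S a \<inter> S b))) \<le> real (card (S a)) + (l - 1) * lam" if a: "a \<in> L" for a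
  proof -
    have e: "(\<Sum>b\<in>L. real (card (S a \<inter> S b))) = real (card (S a \<inter> S a)) + (\<Sum>b\<in>L-{a}. real (card (S a \<inter> S b)))"
      by (rule sum.remove[OF fin a])
    have le: "(\<Sum>b\<in>L-{a}. real (card (S a \<inter> S b))) \<le> real (card (L - {a})) * lam"
    proof -
      have h: "real (card (S a \<inter> S b)) \<le> lam" if "b \<in> L - {a}" for b
      proof -
        have "b \<in> L" "a \<noteq> b" using that by auto
        then show ?thesis using inter[rule_format, OF a] by simp
      qed
      show ?thesis by (rule sum_bounded_above[OF h])
    qed
    have c: "real (card (L - {a})) = l - 1"
    proof -
      have "card L \<ge> 1" using fin a by (simp add: Suc_le_eq card_gt_0_iff) blast
      then show ?thesis using fin a by (simp add: l_def of_nat_diff)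
    qed
    show ?thesis using e le c by simp
  qed
  have Q_le: "Q \<le> s + l * ((l - 1) * lam)"
  proof -
    have "Q \<le> (\<Sum>a\<in>L. real (card (S a)) + (l - 1) * lam)"
      unfolding Q_eq by (rule sum_mono) (rule row)
    also have "\<dots> = s + l * ((l - 1) * lam)" by (simp add: sum.distrib s_def l_def)
    finally show ?thesis .
  qed
  have "0 \<le> (\<Sum>x<N. (deg x - \<alpha>)^2)" by (intro sum_nonneg) auto
  also have "(\<Sum>x<N. (deg x - \<alpha>)^2) = Q - 2 * \<alpha> * s + real N * \<alpha>^2"
    unfolding Q_def power2_diff s_eq[symmetric]
    apply (simp add: sum.distrib sum_subtractf sum_distrib_left sum_distrib_right mult.assoc)
    apply (simp add: mult.commute)
    done
  finally have key: "0 \<le> Q - 2 * \<alpha> * s + real N * \<alpha>^2" .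
  have lpos: "l > 0" using fin ne by (simp add: l_def card_gt_0_iff)
  have sge: "l * m \<le> s"
    using sum_bounded_below[of L m "\<lambda>c. real (card (S c))"] mle by (simp add: s_def l_def)
  have a_ge: "2 * \<alpha> - 1 \<ge> 0" using big Npos by (simp add: \<alpha>_def l_def field_simps)
  have "(2 * \<alpha> - 1) * (l * m) \<le> (2 * \<alpha> - 1) * s" using sge a_ge by (rule mult_left_mono)
  also have "\<dots> \<le> real N * \<alpha>^2 + l * ((l - 1) * lam)" using key Q_le by (simp add: algebra_simps)
  finally have ineq: "(2 * \<alpha> - 1) * (l * m) \<le> real N * \<alpha>^2 + l * ((l - 1) * lam)" .
  have aN: "\<alpha> * real N = l * m" using Npos by (simp add: \<alpha>_def)
  have e1: "real N * \<alpha>^2 = \<alpha> * (l * m)"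
  proof -
    have "real N * \<alpha>^2 = \<alpha> * (\<alpha> * real N)" by (simp add: power2_eq_square mult_ac)
    then show ?thesis by (simp only: aN)
  qed
  have split: "(2 * \<alpha> - 1) * (l * m) = \<alpha> * (l * m) + (\<alpha> - 1) * (l * m)" by (simp add: algebra_simps)
  have "(\<alpha> - 1) * (l * m) \<le> l * ((l - 1) * lam)" using ineq e1 split by linarith
  then have "l * ((\<alpha> - 1) * m) \<le> l * ((l - 1) * lam)" by (simp only: mult_ac)
  then have "(\<alpha> - 1) * m \<le> (l - 1) * lam" using lpos by (rule mult_left_le_imp_le)
  then have "real N * ((\<alpha> - 1) * m) \<le> real N * ((l - 1) * lam)" by (rule mult_left_mono) simp
  moreover have "real N * ((\<alpha> - 1) * m) = (\<alpha> * real N) * m - real N * m" by (simp add: algebra_simps)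
  ultimately have "l * m * m - real N * m \<le> real N * ((l - 1) * lam)" unfolding aN by linarith
  moreover have "real (card L) * (m^2 - real N * lam) = l * m * m - real N * lam * l" by (simp add: l_def algebra_simps power2_eq_square)
  moreover have "real N * ((l - 1) * lam) = real N * lam * l - real N * lam" by (simp add: algebra_simps)
  ultimately show ?thesis by (simp add: algebra_simps)
qed



lemma endgame:
  fixes n t N h l m :: real
  assumes n: "n > 0" and t0: "0 \<le> t" and tn: "t < n" and N1: "n - t \<le> N" and N2: "N \<le> n + t"
    and h0: "0 \<le> h" and hn: "h \<le> n" and D: "h * n - 2 * t * n + t^2 > 0"
    and l0: "l \<ge> 0" and mdef: "m = max n N - t"
    and alt: "2 * l * m < N \<or> l * (m^2 - N * (n - h)) \<le> N * (m - (n - h))"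
  shows "l * (h * n - 2 * t * n + t^2) \<le> h * (n + t)"
proof -
  define D where "D = h * n - 2 * t * n + t^2"
  have Dpos: "D > 0" using D by (simp add: D_def)
  have "h * n > t * n"
  proof -
    have "t * (n - t) \<ge> 0" using t0 tn by simp
    then show ?thesis using D by (simp add: power2_eq_square algebra_simps)
  qed
  then have ht: "h > t" using n by simp
  have main_ineq: "n * D \<le> 2 * (n - t) * (n + t) * h"
  proof -
    have "0 \<le> h * (n^2 - 2 * t^2) + t * n * (2 * n - t)"
    proof (cases "n^2 \<ge> 2 * t^2")
      case True then show ?thesis using h0 t0 tn n by (simp add: mult_nonneg_nonneg)
    next
      case False
      then have "h * (n^2 - 2 * t^2) \<ge> n * (n^2 - 2 * t^2)"
        using hn by (intro mult_right_mono_neg) auto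
      moreover have "n * (n^2 - 2 * t^2) + t * n * (2 * n - t) = n * ((n + 3 * t) * (n - t))"
        by (simp add: power2_eq_square algebra_simps)
      moreover have "n * ((n + 3 * t) * (n - t)) \<ge> 0" using n t0 tn by simp
      ultimately show ?thesis by linarith
    qed
    then show ?thesis by (simp add: D_def power2_eq_square algebra_simps)
  qed
  have "l * D \<le> h * (n + t)"
  proof (cases "2 * l * m < N")
    case True
    have key: "2 * l * (n - t) \<le> n"
    proof (cases "N \<le> n")
      case True
      then have "m = n - t" using mdef by simp
      then show ?thesis using \<open>2 * l * m < N\<close> True by simp
    next
      case False
      then have mN: "m = N - t" using mdef by simp
      have Nt: "N - t > 0" using False tn by simp
      have "2 * l * (n - t) * (N - t) = (2 * l * (N - t)) * (n - t)" by simp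
      also have "\<dots> \<le> N * (n - t)" using \<open>2 * l * m < N\<close> mN tn
        by (intro mult_right_mono) auto
      also have "\<dots> \<le> n * (N - t)" using False t0 by (simp add: algebra_simps mult_right_mono)
      finally show ?thesis using Nt by simp
    qed
    have "(l * D) * (2 * (n - t)) = (2 * l * (n - t)) * D" by simp
    also have "\<dots> \<le> n * D" using key Dpos by (intro mult_right_mono) auto
    also have "\<dots> \<le> (h * (n + t)) * (2 * (n - t))" using main_ineq by (simp add: algebra_simps)
    finally show ?thesis using tn by simp
  next
    case False
    then have b: "l * (m^2 - N * (n - h)) \<le> N * (m - (n - h))" using alt by simp
    show ?thesis
    proof (cases "N \<le> n")
      case True
      then have "m = n - t" using mdef by simp
      then have b': "l * ((n - t)^2 - N * (n - h)) \<le> N * (h - t)" using b by simp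
      have "D \<le> (n - t)^2 - N * (n - h)"
      proof -
        have "0 \<le> (n - N) * (n - h)" using True hn by simp
        then show ?thesis by (simp add: D_def power2_eq_square algebra_simps)
      qed
      then have "l * D \<le> l * ((n - t)^2 - N * (n - h))" using l0 by (rule mult_left_mono)
      also have "\<dots> \<le> N * (h - t)" by (rule b')
      also have "\<dots> \<le> n * h" using True ht t0 N1 tn
        by (smt (verit) mult_left_mono mult_right_mono)
      also have "\<dots> \<le> h * (n + t)" using h0 t0 by (simp add: algebra_simps)
      finally show ?thesis .
    next
      case False
      define e where "e = N - n"
      have e0: "0 \<le> e" and et: "e \<le> t" using False N2 by (auto simp: e_def)
      have mN: "m = N - t" using False mdef by simp
      define DN where "DN = D + e * (n - 2 * t + e + h)"
      have DNeq: "m^2 - N * (n - h) = DN"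
        by (simp add: DN_def D_def mN e_def power2_eq_square algebra_simps)
      have pos1: "n - 2 * t + e + h > 0" using ht tn e0 by simp
      have "e * (n - 2 * t + e + h) \<ge> 0" using pos1 e0 by simp
      then have DNpos: "DN > 0" using Dpos by (simp add: DN_def)
      have b': "l * DN \<le> N * (e + h - t)" proof -
        have eq: "N - t - (n - h) = e + h - t" by (simp add: e_def)
        have "l * DN \<le> N * (N - t - (n - h))" using b unfolding mN DNeq[unfolded mN] .
        then show ?thesis unfolding eq .
      qed
      have ident: "h * (n + t) * DN - N * (e + h - t) * D
          = D * ((t - e) * (h + n + e)) + h * (n + t) * (e * (n - 2 * t + e + h))"
        by (simp add: DN_def e_def algebra_simps)
      have "D * ((t - e) * (h + n + e)) \<ge> 0" using Dpos et e0 h0 n by simp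
      moreover have "h * (n + t) * (e * (n - 2 * t + e + h)) \<ge> 0" using h0 n t0 e0 pos1 by simp
      ultimately have ineq2: "N * (e + h - t) * D \<le> h * (n + t) * DN" using ident by linarith
      have "(l * D) * DN = (l * DN) * D" by simp
      also have "\<dots> \<le> N * (e + h - t) * D" using b' Dpos by (intro mult_right_mono) auto
      also have "\<dots> \<le> h * (n + t) * DN" by (rule ineq2)
      finally show ?thesis using DNpos by simp
    qed
  qed
  then show ?thesis by (simp add: D_def)
qed



lemma nths_mono_subseq: "A \<subseteq> B \<Longrightarrow> subseq (nths xs A) (nths xs B)"
proof (induction xs arbitrary: A B)
  case Nil then show ?case by simp
next
  case (Cons x xs)
  have "{j. Suc j \<in> A} \<subseteq> {j. Suc j \<in> B}" using Cons.prems by auto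
  then have IH: "subseq (nths xs {j. Suc j \<in> A}) (nths xs {j. Suc j \<in> B})" by (rule Cons.IH)
  show ?case
  proof (cases "0 \<in> A")
    case True
    then have "0 \<in> B" using Cons.prems by auto
    then show ?thesis using True IH by (simp add: nths_Cons)
  next
    case False
    show ?thesis
    proof (cases "0 \<in> B")
      case True then show ?thesis using False IH by (simp add: nths_Cons list_emb_Cons)
    next
      case False2: False then show ?thesis using False IH by (simp add: nths_Cons)
    qed
  qed
qed

lemma nths_restrict: "nths xs I = nths xs (I \<inter> {..<length xs})"
  unfolding nths_def
proof (rule arg_cong[where f="map fst"], rule filter_cong[OF HOL.refl])
  fix p assume p: "p \<in> set (zip xs [0..<length xs])"
  obtain a b where ab: "p = (a, b)" by (cases p)
  have "b \<in> set [0..<length xs]" using p ab by (metis set_zip_rightD)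
  then have "b < length xs" by simp
  then show "(snd p \<in> I) = (snd p \<in> I \<inter> {..<length xs})" using ab by simp
qed

lemma two_elems: "2 \<le> card C \<Longrightarrow> \<exists>a b. a \<in> C \<and> b \<in> C \<and> a \<noteq> b"
proof -
  assume c: "2 \<le> card C"
  then have f: "finite C" by (metis card.infinite not_numeral_le_zero)
  have "\<not> card C \<le> Suc 0" using c by simp
  then show ?thesis using card_le_Suc0_iff_eq[OF f] by blast
qed

lemma ball_sets:
  assumes "c \<in> lev_ball v t t" "length c = n" "length v = N"
  shows "\<exists>S. S \<subseteq> {..<N} \<and> subseq (nths v S) c \<and> n \<le> card S + t \<and> N \<le> card S + t"
proof -
  from assms(1) obtain i j where ij: "i \<le> t" "j \<le> t" "obt v i j c" unfolding lev_ball_def by blast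
  from obt_common[OF ij(3)] obtain x where x: "subseq x v" "subseq x c" "length v \<le> length x + j"
    "length c + j = length v + i" by blast
  from x(1) obtain S0 where S0: "x = nths v S0" by (auto simp: subseq_conv_nths)
  define S where "S = S0 \<inter> {..<N}"
  have xS: "x = nths v S" using S0 nths_restrict assms(3) by (metis S_def)
  have "length x = card S" unfolding xS length_nths S_def using assms(3)
    by (intro arg_cong[where f=card]) auto
  moreover have "S \<subseteq> {..<N}" by (simp add: S_def)
  moreover have "n \<le> card S + t" using x(3,4) ij assms(2,3) \<open>length x = card S\<close> by linarith
  moreover have "N \<le> card S + t" using x(3) ij assms(3) \<open>length x = card S\<close> by linarith
  ultimately show ?thesis using x(2) xS by blast
qed

theorem mainTheorem3:
  fixes C :: "('a::finite) list set" and n t N d :: nat and v :: "'a list"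
  assumes "\<forall>c\<in>C. length c = n"
    and "card C \<ge> 2"
    and "d = min_lev_dist C"
    and "t < n"
    and "n - t \<le> N" and "N \<le> n + t"
    and "length v = N"
    and "real t < real n - sqrt (real n * (real n - real d / 2))"
  shows "real (card (lev_ball v t t \<inter> C))
           \<le> (real d / 2) * (real n + real t) / ((real d / 2 - 2 * real t) * real n + (real t)^2)
       \<and> (real d / 2) * (real n + real t) / ((real d / 2 - 2 * real t) * real n + (real t)^2)
           \<le> real n * real d"
proof -
  note lenC = assms(1) and cardC = assms(2) and dd = assms(3) and tn = assms(4)
    and N1 = assms(5) and N2 = assms(6) and lv = assms(7) and hyp = assms(8)
  have finC: "finite C" using cardC by (metis card.infinite not_numeral_le_zero)
  define P where "P = {lev_dist c1 c2 | c1 c2. c1 \<in> C \<and> c2 \<in> C \<and> c1 \<noteq> c2}"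
  have finP: "finite P"
  proof -
    have "P \<subseteq> (\<lambda>(a, b). lev_dist a b) ` (C \<times> C)" unfolding P_def by auto
    moreover have "finite ((\<lambda>(a, b). lev_dist a b) ` (C \<times> C))" using finC by simp
    ultimately show ?thesis by (rule finite_subset)
  qed
  obtain a0 b0 where ab0: "a0 \<in> C" "b0 \<in> C" "a0 \<noteq> b0" using two_elems[OF cardC] by blast
  have Pne: "P \<noteq> {}" using ab0 unfolding P_def by blast
  have dP: "d \<in> P" unfolding dd min_lev_dist_def P_def[symmetric] using finP Pne by (rule Min_in)
  then obtain c1 c2 where c12: "c1 \<in> C" "c2 \<in> C" "d = lev_dist c1 c2" unfolding P_def by blast
  have d_even: "even d"
  proof -
    have "even (length c1 + length c2 + d)" using relpow_indel_parity[OF lev_dist_path[of c1 c2]] unfolding c12(3) .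
    then show ?thesis using lenC c12 by simp
  qed
  have d_le: "d \<le> 2 * n"
  proof -
    have "d \<le> (length c1 - length ([]::'a list)) + (length c2 - length ([]::'a list))"
      unfolding c12(3) by (rule lev_dist_common) auto
    then show ?thesis using lenC c12 by simp
  qed
  have d_min: "d \<le> lev_dist a b" if "a \<in> C" "b \<in> C" "a \<noteq> b" for a b
  proof -
    have "lev_dist a b \<in> P" using that unfolding P_def by blast
    then show ?thesis unfolding dd min_lev_dist_def P_def[symmetric] by (rule Min_le[OF finP])
  qed
  define L where "L = lev_ball v t t \<inter> C"
  have finL: "finite L" using finC by (simp add: L_def)
  have "\<forall>c\<in>L. \<exists>S. S \<subseteq> {..<N} \<and> subseq (nths v S) c \<and> n \<le> card S + t \<and> N \<le> card S + t"
  proof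
    fix c assume "c \<in> L"
    then have "c \<in> lev_ball v t t" "length c = n" using lenC unfolding L_def by auto
    then show "\<exists>S. S \<subseteq> {..<N} \<and> subseq (nths v S) c \<and> n \<le> card S + t \<and> N \<le> card S + t"
      using lv by (rule ball_sets)
  qed
  then obtain Sf where Sf: "\<forall>c\<in>L. Sf c \<subseteq> {..<N} \<and> subseq (nths v (Sf c)) c \<and> n \<le> card (Sf c) + t \<and> N \<le> card (Sf c) + t"
    by (rule bchoice[THEN exE]) blast
  define h where "h = real d / 2"
  define m where "m = real (max n N) - real t"
  have inter: "\<forall>a\<in>L. \<forall>b\<in>L. a \<noteq> b \<longrightarrow> real (card (Sf a \<inter> Sf b)) \<le> real n - h"
  proof (intro ballI impI)
    fix a b assume ab: "a \<in> L" "b \<in> L" "a \<noteq> b"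
    define z where "z = nths v (Sf a \<inter> Sf b)"
    have za: "subseq z a"
      using nths_mono_subseq[of "Sf a \<inter> Sf b" "Sf a" v] Sf ab(1) subseq_order.trans unfolding z_def by blast
    have zb: "subseq z b"
      using nths_mono_subseq[of "Sf a \<inter> Sf b" "Sf b" v] Sf ab(2) subseq_order.trans unfolding z_def by blast
    have lz: "length z = card (Sf a \<inter> Sf b)"
      unfolding z_def length_nths lv using Sf ab(1) by (intro arg_cong[where f=card]) auto
    have aC: "a \<in> C" "b \<in> C" using ab unfolding L_def by auto
    have "d \<le> lev_dist a b" using d_min aC ab(3) by blast
    also have "\<dots> \<le> (length a - length z) + (length b - length z)" using za zb by (rule lev_dist_common)
    finally have "d \<le> (n - card (Sf a \<inter> Sf b)) + (n - card (Sf a \<inter> Sf b))" using lenC aC lz by simp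
    moreover have "card (Sf a \<inter> Sf b) \<le> n"
    proof -
      have "length z \<le> length a" by (rule list_emb_length[OF za])
      then show ?thesis using lz lenC aC by simp
    qed
    ultimately show "real (card (Sf a \<inter> Sf b)) \<le> real n - h" unfolding h_def by linarith
  qed
  have Npos: "N > 0" using N1 tn by linarith
  have mle: "\<forall>c\<in>L. m \<le> real (card (Sf c))"
  proof
    fix c assume "c \<in> L"
    then have "n \<le> card (Sf c) + t" "N \<le> card (Sf c) + t" using Sf by auto
    then show "m \<le> real (card (Sf c))" unfolding m_def by simp
  qed
  define l where "l = real (card L)"
  have alt: "2 * l * m < real N \<or> l * (m^2 - real N * (real n - h)) \<le> real N * (m - (real n - h))"
  proof (cases "L = {}")
    case True then show ?thesis using Npos by (simp add: l_def)
  next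
    case False
    show ?thesis
    proof (cases "2 * l * m < real N")
      case True then show ?thesis by simp
    next
      case False2: False
      have "l * (m^2 - real N * (real n - h)) \<le> real N * (m - (real n - h))"
        unfolding l_def
        by (rule count_bound[OF finL False _ mle inter Npos]) (use Sf False2 in \<open>auto simp: l_def\<close>)
      then show ?thesis by simp
    qed
  qed
  have h0: "0 \<le> h" unfolding h_def by simp
  have hn: "h \<le> real n" unfolding h_def using d_le by simp
  have Dpos: "h * real n - 2 * real t * real n + (real t)^2 > 0"
  proof -
    have X0: "0 \<le> real n * (real n - h)" using hn by simp
    have "sqrt (real n * (real n - h)) < real n - real t" using hyp unfolding h_def by simp
    moreover have "0 \<le> sqrt (real n * (real n - h))" using X0 by simp
    ultimately have "(sqrt (real n * (real n - h)))^2 < (real n - real t)^2"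
      by (intro power_strict_mono) auto
    then have "real n * (real n - h) < (real n - real t)^2" using X0 by simp
    then show ?thesis by (simp add: power2_eq_square algebra_simps)
  qed
  have "l * (h * real n - 2 * real t * real n + (real t)^2) \<le> h * (real n + real t)"
    by (rule endgame[OF _ _ _ _ _ h0 hn Dpos _ _ alt]) (use tn N1 N2 in \<open>auto simp: m_def l_def\<close>)
  define D where "D = h * real n - 2 * real t * real n + (real t)^2"
  have Deq: "(real d / 2 - 2 * real t) * real n + (real t)^2 = D" unfolding D_def h_def by (simp add: algebra_simps)
  have first: "l \<le> h * (real n + real t) / D"
    using \<open>l * _ \<le> _\<close> Dpos unfolding D_def[symmetric] by (simp add: pos_le_divide_eq)
  obtain k where k: "d = 2 * k" using d_even by blast
  have hk: "h = real k" unfolding h_def k by simp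
  have D1: "D \<ge> 1"
  proof -
    define Di :: int where "Di = int k * int n - 2 * int t * int n + (int t)^2"
    have "real_of_int Di = D" unfolding Di_def D_def hk by simp
    then have "Di > 0" using Dpos unfolding D_def[symmetric] by simp
    then have "Di \<ge> 1" by simp
    then show ?thesis using \<open>real_of_int Di = D\<close> by linarith
  qed
  have "h * (real n + real t) / D \<le> h * (real n + real t)"
    using divide_left_mono[of 1 D "h * (real n + real t)"] D1 h0 by simp
  also have "\<dots> \<le> h * (2 * real n)" using h0 tn by (intro mult_left_mono) auto
  also have "\<dots> = real n * real d" unfolding h_def by simp
  finally have second: "h * (real n + real t) / D \<le> real n * real d" .
  have Deq2: "(h - 2 * real t) * real n + (real t)^2 = D" unfolding D_def by (simp add: algebra_simps)
  have first': "real (card (lev_ball v t t \<inter> C)) \<le> h * (real n + real t) / D"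
    using first unfolding l_def L_def .
  show ?thesis unfolding h_def[symmetric] Deq2 using first' second by (rule conjI)
qed


end
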